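(* Let $p\neq2$ be a prime and let $a_2,a_3,b_2,b_3$ be nonzero elements of the field $\mathbb{Z}(p)$ of integers modulo $p$ with $a_2b_3=a_3b_2$. Then there exist independent $\mathbb{Z}(p)$-valued random variables $\xi_1,\xi_2,\xi_3,\xi_4$ with nowhere-vanishing characteristic functions, with $\xi_2$ and $\xi_3$ identically distributed, and independent $\mathbb{Z}(p)$-valued random variables $\eta_1,\eta_2,\eta_3,\eta_4$ with nowhere-vanishing characteristic functions, with $\eta_2$ and $\eta_3$ identically distributed, such that $(\xi_1+a_2\xi_2+a_3\xi_3,\ b_2\xi_2+b_3\xi_3+\xi_4)$ and $(\eta_1+a_2\eta_2+a_3\eta_3,\ b_2\eta_2+b_3\eta_3+\eta_4)$ have the same distribution, but the distribution of $\eta_2$ is not equal to the distribution of $\xi_2+\alpha$ for any $\alpha\in\mathbb{Z}(p)$.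
   Context: The character group of the additive group of $\mathbb{Z}(p)$ is isomorphic to $\mathbb{Z}(p)$; write $(x,y)$ for the value of the character $y$ at $x$. The characteristic function of a $\mathbb{Z}(p)$-valued random variable $\xi$ is $y\mapsto\mathbf{E}[(\xi,y)]$ on the character group; "nowhere-vanishing" means it is nonzero at every $y$. *)

theory Defs
  imports "HOL-Probability.Probability" "Berlekamp_Zassenhaus.Finite_Field"
begin

text \<open>The field Z(p) is the type 'p mod_ring with CARD('p) = p prime.
  The character group of Z(p) is identified with Z(p): the value of the
  character y at x is exp(2 pi i x y / p).\<close>

definition zp_char :: "'p::prime_card mod_ring \<Rightarrow> 'p mod_ring \<Rightarrow> complex" where
  "zp_char x y = cis (2 * pi * real_of_int (to_int_mod_ring (x * y)) / real CARD('p))"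

definition zp_charfun :: "'a measure \<Rightarrow> ('a \<Rightarrow> 'p::prime_card mod_ring) \<Rightarrow> 'p mod_ring \<Rightarrow> complex" where
  "zp_charfun M X y = prob_space.expectation M (\<lambda>\<omega>. zp_char (X \<omega>) y)"

end

theory Submission imports Defs begin

lemma zp_char_add: "zp_char (x + z) (y::'p::prime_card mod_ring) = zp_char x y * (zp_char z y :: complex)"
proof -
  define a where "a = to_int_mod_ring (x*y)"
  define b where "b = to_int_mod_ring (z*y)"
  define n where "n = int CARD('p)"
  have "to_int_mod_ring ((x+z)*y) = (a + b) mod n"
    unfolding a_def b_def n_def by (simp add: distrib_right to_int_mod_ring_add)
  also have "\<dots> = a + b - n * ((a+b) div n)" by (metis minus_mult_div_eq_mod)
  finally have e: "to_int_mod_ring ((x+z)*y) = a + b - n * ((a+b) div n)" .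
  have np: "real CARD('p) = real_of_int n" unfolding n_def by simp
  have n0: "real_of_int n \<noteq> 0" unfolding n_def by simp
  have "zp_char (x + z) y = cis (2*pi*a/n + 2*pi*b/n + 2*pi*(- of_int ((a+b) div n)))"
    unfolding zp_char_def e np using n0 by (simp add: field_simps)
  also have "\<dots> = cis (2*pi*a/n) * cis (2*pi*b/n) * cis (2*pi*(- of_int ((a+b) div n)))"
    by (simp add: cis_mult)
  also have "cis (2*pi*(- of_int ((a+b) div n))) = 1"
    by (rule cis_multiple_2pi) (metis Ints_minus Ints_of_int)
  finally show ?thesis unfolding zp_char_def a_def b_def np by simp
qed

lemma zp_char_0: "zp_char 0 y = 1"
  by (simp add: zp_char_def)

lemma zp_char_1_ne: assumes "(y::'p::prime_card mod_ring) \<noteq> 0" shows "zp_char 1 y \<noteq> 1"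
proof
  assume h: "zp_char 1 y = 1"
  define t where "t = to_int_mod_ring y"
  have t0: "t \<noteq> 0" unfolding t_def using assms by simp
  have "t \<in> {0..<int CARD('p)}" unfolding t_def using range_to_int_mod_ring by blast
  hence t1: "0 < t" "t < int CARD('p)" using t0 by auto
  have "cos (2 * pi * t / CARD('p)) = 1" using h unfolding zp_char_def t_def
    by (metis complex.sel(1) cis.sel(1) one_complex.sel(1) mult_1)
  then obtain m :: int where m: "2 * pi * t / CARD('p) = m * 2 * pi" using cos_one_2pi_int[of "2 * pi * t / CARD('p)"] by auto
  hence "real_of_int t = m * CARD('p)" by (simp add: field_simps)
  hence "t = m * int CARD('p)" by (metis of_int_eq_iff of_int_mult of_int_of_nat_eq)
  with t1 show False
    by (smt (verit, ccfv_threshold) mult_le_cancel_right2 mult_less_cancel_right2 of_nat_0_less_iff zero_less_card_finite zero_less_mult_iff)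
qed

lemma zp_char_orth: assumes "(y::'p::prime_card mod_ring) \<noteq> 0" shows "(\<Sum>x\<in>UNIV. zp_char x y) = 0"
proof -
  define S where "S = (\<Sum>x\<in>UNIV. zp_char x y)"
  have "S = (\<Sum>x\<in>UNIV. zp_char (x + 1) y)"
    unfolding S_def by (rule sum.reindex_bij_witness[of _ "\<lambda>x. x + 1" "\<lambda>x. x - 1"]) auto
  also have "\<dots> = S * zp_char 1 y" unfolding S_def by (simp add: zp_char_add sum_distrib_right)
  finally have "S * (1 - zp_char 1 y) = 0" by (simp add: algebra_simps)
  thus ?thesis using zp_char_1_ne[OF assms] unfolding S_def by simp
qed


definition mkpmf :: "real \<Rightarrow> real \<Rightarrow> 'a::{finite,zero} pmf" where
  "mkpmf A B = embed_pmf (\<lambda>x. if x = 0 then A + B else B)"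

lemma sum_ind0: "(\<Sum>x\<in>(UNIV::'a::{finite,zero} set). (if x = 0 then c else 0)) = (c::'b::comm_monoid_add)"
  by (simp add: sum.delta)

lemma pmf_mkpmf:
  assumes "A + real CARD('a) * B = 1" "0 \<le> B" "0 \<le> A + B"
  shows "pmf (mkpmf A B :: 'a::{finite,zero} pmf) x = (if x = 0 then A + B else B)"
  unfolding mkpmf_def
proof (rule pmf_embed_pmf)
  show "\<And>x. 0 \<le> (if (x::'a) = 0 then A + B else B)" using assms by auto
  have "(\<Sum>x\<in>(UNIV::'a set). (if x = 0 then A + B else B)) = (\<Sum>x\<in>(UNIV::'a set). (if x = 0 then A else 0) + B)"
    by (intro sum.cong) auto
  also have "\<dots> = A + real CARD('a) * B" by (simp add: sum.distrib sum_ind0)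
  finally have s: "(\<Sum>x\<in>(UNIV::'a set). (if x = 0 then A + B else B)) = 1" using assms by simp
  have "(\<integral>\<^sup>+x. ennreal (if (x::'a) = 0 then A + B else B) \<partial>count_space UNIV)
      = (\<Sum>x\<in>UNIV. ennreal (if (x::'a) = 0 then A + B else B))"
    by (simp add: nn_integral_count_space_finite)
  also have "\<dots> = ennreal (\<Sum>x\<in>UNIV. (if (x::'a) = 0 then A + B else B))"
    using assms by (intro sum_ennreal) auto
  finally show "(\<integral>\<^sup>+x. ennreal (if (x::'a) = 0 then A + B else B) \<partial>count_space UNIV) = 1"
    using s by simp
qed

lemma pmf_mkpmf_mr:
  assumes "A + real CARD('p) * B = 1" "0 \<le> B" "0 \<le> A + B"
  shows "pmf (mkpmf A B :: 'p::finite mod_ring pmf) x = (if x = 0 then A + B else B)"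
proof -
  have "A + real CARD('p mod_ring) * B = 1" using assms(1) by (simp only: CARD_mod_ring)
  then show ?thesis by (rule pmf_mkpmf[OF _ assms(2,3)])
qed

lemma charfun_mkpmf:
  assumes "A + real CARD('p) * B = 1" "0 \<le> B" "0 \<le> A + B"
  shows "measure_pmf.expectation (mkpmf A B :: 'p::prime_card mod_ring pmf) (\<lambda>x. zp_char x y)
     = (if y = 0 then 1 else complex_of_real A)"
proof -
  have "measure_pmf.expectation (mkpmf A B :: 'p mod_ring pmf) (\<lambda>x. zp_char x y)
      = (\<Sum>x\<in>UNIV. pmf (mkpmf A B :: 'p mod_ring pmf) x *\<^sub>R zp_char x y)"
    by (rule integral_measure_pmf[where A=UNIV]) simp_all
  also have "\<dots> = (\<Sum>x\<in>UNIV. (if x = 0 then complex_of_real A else 0) + complex_of_real B * zp_char x y)"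
  proof (rule sum.cong[OF refl])
    fix x :: "'p mod_ring"
    show "pmf (mkpmf A B) x *\<^sub>R zp_char x y = (if x = 0 then complex_of_real A else 0) + complex_of_real B * zp_char x y"
      unfolding pmf_mkpmf_mr[OF assms] scaleR_conv_of_real
      by (cases "x = 0") (simp_all add: zp_char_0 distrib_right)
  qed
  also have "\<dots> = complex_of_real A + complex_of_real B * (\<Sum>x\<in>UNIV. zp_char x y)"
    by (simp add: sum.distrib sum_ind0 sum_distrib_left)
  also have "\<dots> = (if y = 0 then 1 else complex_of_real A)"
  proof (cases "y = 0")
    case True
    have "complex_of_real A + complex_of_real B * of_nat CARD('p) = complex_of_real (A + real CARD('p) * B)"
      by simp
    then show ?thesis using True assms(1) by (simp add: zp_char_def)
  qed (simp add: zp_char_orth)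
  finally show ?thesis .
qed

lemma pmf_lin_pair:
  fixes a2 a3 :: "'p::prime_card mod_ring"
  assumes "A + real CARD('p) * B = 1" "0 \<le> B" "0 \<le> A + B" "a2 \<noteq> 0" "a3 \<noteq> 0"
  shows "pmf (map_pmf (\<lambda>(x,y). a2*x + a3*y) (pair_pmf (mkpmf A B) (mkpmf A B))) z
     = (if z = 0 then A^2 else 0) + 2*A*B + real CARD('p) * B^2"
proof -
  define f where "f = (\<lambda>x::'p mod_ring. if x = 0 then A + B else B)"
  define h where "h = (\<lambda>x::'p mod_ring. (z - a2*x)/a3)"
  have pf: "pmf (mkpmf A B) x = f x" for x unfolding f_def by (rule pmf_mkpmf_mr[OF assms(1-3)])
  have "pmf (map_pmf (\<lambda>(x,y). a2*x + a3*y) (pair_pmf (mkpmf A B) (mkpmf A B))) z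
     = measure (pair_pmf (mkpmf A B) (mkpmf A B)) ((\<lambda>(x,y). a2*x + a3*y) -` {z})"
    by (rule pmf_map)
  also have "\<dots> = (\<Sum>w\<in>(\<lambda>(x,y). a2*x + a3*y) -` {z}. pmf (pair_pmf (mkpmf A B) (mkpmf A B)) w)"
    by (rule measure_measure_pmf_finite) simp
  also have "(\<lambda>(x,y). a2*x + a3*y) -` {z} = (\<lambda>x. (x, h x)) ` UNIV"
    using assms(4,5) by (auto simp: h_def field_simps image_iff)
  also have "(\<Sum>w\<in>(\<lambda>x. (x, h x)) ` UNIV. pmf (pair_pmf (mkpmf A B) (mkpmf A B)) w)
      = (\<Sum>x\<in>UNIV. f x * f (h x))"
    by (subst sum.reindex) (auto simp: inj_on_def pmf_pair pf)
  also have "\<dots> = (\<Sum>x\<in>UNIV. (if x = 0 then A^2 * (if z = 0 then 1 else 0) + A * B else 0)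
         + (if x = z / a2 then A * B else 0) + B^2)"
  proof (rule sum.cong[OF refl])
    fix x
    have hx: "h x = 0 \<longleftrightarrow> x = z / a2" using assms(4,5) by (auto simp: h_def field_simps)
    have h0: "h 0 = 0 \<longleftrightarrow> z = 0" using assms(4,5) by (auto simp: h_def)
    show "f x * f (h x) = (if x = 0 then A^2 * (if z = 0 then 1 else 0) + A * B else 0)
         + (if x = z / a2 then A * B else 0) + B^2"
      using hx h0 by (cases "x = 0"; cases "h x = 0") (auto simp: f_def power2_eq_square algebra_simps)
  qed
  also have "\<dots> = (if z = 0 then A^2 else 0) + 2*A*B + real CARD('p) * B^2"
    by (simp add: sum.distrib sum_ind0 sum.delta)
  finally show ?thesis .
qed


definition PP :: "'a pmf \<Rightarrow> nat \<Rightarrow> 'a::zero pmf" where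
  "PP q = (\<lambda>i. if i \<in> {2,3} then q else return_pmf 0)"

definition PiQ :: "'a::zero pmf \<Rightarrow> (nat \<Rightarrow> 'a) pmf" where
  "PiQ q = Pi_pmf {1,2,3,4} 0 (PP q)"

lemma PiQ_comp: "i \<in> {1,2,3,4} \<Longrightarrow> map_pmf (\<lambda>f. f i) (PiQ q) = PP q i"
  unfolding PiQ_def by (subst Pi_pmf_component) auto

lemma distr_PiQ: "i \<in> {1,2,3,4} \<Longrightarrow>
  distr (measure_pmf (PiQ q)) (count_space UNIV) (\<lambda>f. f i) = measure_pmf (PP q i)"
  by (metis PiQ_comp map_pmf_rep_eq)

lemma PiQ_23: "PiQ q = Pi_pmf {2,3} 0 (PP q)"
  unfolding PiQ_def by (rule Pi_pmf_subset') (auto simp: PP_def)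

lemma PiQ_pair: "map_pmf g (PiQ q) = map_pmf (\<lambda>(x,y). g (\<lambda>i. if i = 2 then x else if i = 3 then y else 0)) (pair_pmf q q)"
proof -
  have "PiQ q = map_pmf (\<lambda>(y,f). f(2:=y)) (pair_pmf (PP q 2) (Pi_pmf {3} 0 (PP q)))"
    unfolding PiQ_23 by (subst Pi_pmf_insert[symmetric]) (auto simp: insert_commute)
  also have "Pi_pmf {3} 0 (PP q) = map_pmf (\<lambda>a b. if b = 3 then a else 0) q"
    by (simp add: Pi_pmf_singleton PP_def)
  also have "pair_pmf (PP q 2) (map_pmf (\<lambda>a b. if b = 3 then a else 0) q) = map_pmf (apsnd (\<lambda>a b. if b = (3::nat) then a else 0)) (pair_pmf q q)"
    by (simp add: PP_def pair_map_pmf2)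
  finally have "PiQ q = map_pmf (\<lambda>(y,f). f(2:=y)) (map_pmf (apsnd (\<lambda>a b. if b = 3 then a else 0)) (pair_pmf q q))" .
  then have "map_pmf g (PiQ q) = map_pmf (g \<circ> (\<lambda>(y,f). f(2:=y)) \<circ> apsnd (\<lambda>a b. if b = 3 then a else 0)) (pair_pmf q q)"
    by (simp add: pmf.map_comp o_assoc)
  also have "\<dots> = map_pmf (\<lambda>(x,y). g (\<lambda>i. if i = 2 then x else if i = 3 then y else 0)) (pair_pmf q q)"
    by (intro map_pmf_cong refl) (auto simp: fun_upd_def fun_eq_iff)
  finally show ?thesis .
qed


lemma charfun_PiQ: "i \<in> {1,2,3,4} \<Longrightarrow>
  zp_charfun (measure_pmf (PiQ q)) (\<lambda>f. f i) y = measure_pmf.expectation (PP q i) (\<lambda>x. zp_char x y)"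
  unfolding zp_charfun_def by (simp add: PiQ_comp[symmetric])

lemma pair_gen:
  fixes a2 a3 b2 b3 :: "'p::prime_card mod_ring"
  assumes "a2 \<noteq> 0" "a2 * b3 = a3 * b2"
  shows "map_pmf (\<lambda>\<omega>. (\<omega> 1 + a2 * \<omega> 2 + a3 * \<omega> 3, b2 * \<omega> 2 + b3 * \<omega> 3 + \<omega> 4)) (PiQ q)
    = map_pmf (\<lambda>t. (t, (b2 / a2) * t)) (map_pmf (\<lambda>(x,y). a2*x + a3*y) (pair_pmf q q))"
  unfolding PiQ_pair pmf.map_comp
proof (intro map_pmf_cong refl)
  fix w :: "'p mod_ring \<times> 'p mod_ring"
  obtain x y where w: "w = (x,y)" by (cases w)
  have e3: "b2 / a2 * a3 = b3"
  proof -
    have "b2 / a2 * a3 = (a3 * b2) / a2" by simp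
    also have "\<dots> = (a2 * b3) / a2" using assms(2) by simp
    also have "\<dots> = b3" using assms(1) by simp
    finally show ?thesis .
  qed
  have e2: "b2 / a2 * a2 = b2" using assms(1) by simp
  have "b2 / a2 * (a2 * x + a3 * y) = (b2 / a2 * a2) * x + (b2 / a2 * a3) * y"
    by (simp only: distrib_left mult.assoc)
  also have "\<dots> = b2 * x + b3 * y" by (simp only: e2 e3)
  finally have ee: "b2 * x + b3 * y = b2 / a2 * (a2 * x + a3 * y)" by simp
  show "(case w of (x, y) \<Rightarrow> (\<lambda>\<omega>. (\<omega> 1 + a2 * \<omega> 2 + a3 * \<omega> 3, b2 * \<omega> 2 + b3 * \<omega> 3 + \<omega> 4))
             (\<lambda>i::nat. if i = 2 then x else if i = 3 then y else 0)) =
         ((\<lambda>t. (t, b2 / a2 * t)) \<circ> (\<lambda>(x, y). a2 * x + a3 * y)) w"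
    unfolding w using ee by simp
qed

theorem proposition4p2:
  fixes a2 a3 b2 b3 :: "'p::prime_card mod_ring"
  assumes "CARD('p) \<noteq> 2"
    and "a2 \<noteq> 0" and "a3 \<noteq> 0" and "b2 \<noteq> 0" and "b3 \<noteq> 0"
    and "a2 * b3 = a3 * b2"
  shows "\<exists>(M :: (nat \<Rightarrow> 'p mod_ring) measure) (N :: (nat \<Rightarrow> 'p mod_ring) measure)
            (\<xi> :: nat \<Rightarrow> (nat \<Rightarrow> 'p mod_ring) \<Rightarrow> 'p mod_ring)
            (\<eta> :: nat \<Rightarrow> (nat \<Rightarrow> 'p mod_ring) \<Rightarrow> 'p mod_ring).
     prob_space M \<and> prob_space N \<and>
     prob_space.indep_vars M (\<lambda>_. count_space UNIV) \<xi> {1, 2, 3, 4} \<and>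
     prob_space.indep_vars N (\<lambda>_. count_space UNIV) \<eta> {1, 2, 3, 4} \<and>
     (\<forall>i\<in>{1, 2, 3, 4}. \<forall>y. zp_charfun M (\<xi> i) y \<noteq> 0) \<and>
     (\<forall>i\<in>{1, 2, 3, 4}. \<forall>y. zp_charfun N (\<eta> i) y \<noteq> 0) \<and>
     distr M (count_space UNIV) (\<xi> 2) = distr M (count_space UNIV) (\<xi> 3) \<and>
     distr N (count_space UNIV) (\<eta> 2) = distr N (count_space UNIV) (\<eta> 3) \<and>
     distr M (count_space UNIV)
       (\<lambda>\<omega>. (\<xi> 1 \<omega> + a2 * \<xi> 2 \<omega> + a3 * \<xi> 3 \<omega>, b2 * \<xi> 2 \<omega> + b3 * \<xi> 3 \<omega> + \<xi> 4 \<omega>))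
     = distr N (count_space UNIV)
       (\<lambda>\<omega>. (\<eta> 1 \<omega> + a2 * \<eta> 2 \<omega> + a3 * \<eta> 3 \<omega>, b2 * \<eta> 2 \<omega> + b3 * \<eta> 3 \<omega> + \<eta> 4 \<omega>)) \<and>
     (\<forall>\<alpha>. distr N (count_space UNIV) (\<eta> 2)
            \<noteq> distr M (count_space UNIV) (\<lambda>\<omega>. \<xi> 2 \<omega> + \<alpha>))"
proof -
  define p where "p = real CARD('p)"
  have "prime CARD('p)" by (rule prime_card)
  hence "CARD('p) \<ge> 2" by (rule prime_ge_2_nat)
  hence p3: "p \<ge> 3" using assms(1) unfolding p_def by linarith
  define s where "s = 1 / (p - 1)"
  have s0: "s > 0" "s < 1" using p3 unfolding s_def by (auto simp: field_simps)
  have sp: "(p - 1) * s = 1" using p3 unfolding s_def by simp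
  define \<mu> where "\<mu> = (mkpmf s ((1-s)/p) :: 'p mod_ring pmf)"
  define \<nu> where "\<nu> = (mkpmf (-s) ((1+s)/p) :: 'p mod_ring pmf)"
  have h\<mu>: "s + real CARD('p) * ((1-s)/p) = 1" "0 \<le> (1-s)/p" "0 \<le> s + (1-s)/p"
    using p3 s0 unfolding p_def[symmetric] by auto
  have h\<nu>: "-s + real CARD('p) * ((1+s)/p) = 1" "0 \<le> (1+s)/p" "0 \<le> -s + (1+s)/p"
    using p3 s0 sp unfolding p_def[symmetric] by (auto simp: field_simps)
  define \<xi> where "\<xi> = (\<lambda>(i::nat) (f::nat \<Rightarrow> 'p mod_ring). f i)"
  define M where "M = measure_pmf (PiQ \<mu>)"
  define N where "N = measure_pmf (PiQ \<nu>)"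
  have ind: "prob_space.indep_vars (measure_pmf (PiQ q)) (\<lambda>_. count_space UNIV) \<xi> {1, 2, 3, 4}"
    for q :: "'p mod_ring pmf"
    unfolding PiQ_def \<xi>_def by (rule indep_vars_Pi_pmf) simp
  have cf: "\<forall>i\<in>{1, 2, 3, 4}. \<forall>y. zp_charfun (measure_pmf (PiQ (mkpmf A B))) (\<xi> i) y \<noteq> 0"
    if "A + real CARD('p) * B = 1" "0 \<le> B" "0 \<le> A + B" "A \<noteq> 0" for A B
  proof (intro ballI allI)
    fix i y assume i: "i \<in> {1::nat,2,3,4}"
    show "zp_charfun (measure_pmf (PiQ (mkpmf A B))) (\<xi> i) y \<noteq> (0::complex)"
      unfolding \<xi>_def charfun_PiQ[OF i]
      using that i by (auto simp: PP_def charfun_mkpmf zp_char_0)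
  qed
  have d23: "distr (measure_pmf (PiQ q)) (count_space UNIV) (\<xi> 2) = distr (measure_pmf (PiQ q)) (count_space UNIV) (\<xi> 3)"
    for q :: "'p mod_ring pmf"
    unfolding \<xi>_def by (simp add: distr_PiQ PP_def)
  have lin: "map_pmf (\<lambda>(x,y). a2*x + a3*y) (pair_pmf \<mu> \<mu>) = map_pmf (\<lambda>(x,y). a2*x + a3*y) (pair_pmf \<nu> \<nu>)"
  proof (rule pmf_eqI)
    fix z
    show "pmf (map_pmf (\<lambda>(x,y). a2*x + a3*y) (pair_pmf \<mu> \<mu>)) z = pmf (map_pmf (\<lambda>(x,y). a2*x + a3*y) (pair_pmf \<nu> \<nu>)) z"
      unfolding \<mu>_def \<nu>_def pmf_lin_pair[OF h\<mu> assms(2,3)] pmf_lin_pair[OF h\<nu> assms(2,3)]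
      using p3 unfolding p_def[symmetric] by (simp add: field_simps power2_eq_square)
  qed
  have pair: "distr M (count_space UNIV)
       (\<lambda>\<omega>. (\<xi> 1 \<omega> + a2 * \<xi> 2 \<omega> + a3 * \<xi> 3 \<omega>, b2 * \<xi> 2 \<omega> + b3 * \<xi> 3 \<omega> + \<xi> 4 \<omega>))
     = distr N (count_space UNIV)
       (\<lambda>\<omega>. (\<xi> 1 \<omega> + a2 * \<xi> 2 \<omega> + a3 * \<xi> 3 \<omega>, b2 * \<xi> 2 \<omega> + b3 * \<xi> 3 \<omega> + \<xi> 4 \<omega>))"
    unfolding M_def N_def \<xi>_def map_pmf_rep_eq[symmetric] pair_gen[OF assms(2,6)] lin ..
  have shift: "distr N (count_space UNIV) (\<xi> 2) \<noteq> distr M (count_space UNIV) (\<lambda>\<omega>. \<xi> 2 \<omega> + \<alpha>)" for \<alpha>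
  proof
    assume "distr N (count_space UNIV) (\<xi> 2) = distr M (count_space UNIV) (\<lambda>\<omega>. \<xi> 2 \<omega> + \<alpha>)"
    hence "measure_pmf (map_pmf (\<lambda>f. f 2) (PiQ \<nu>)) = measure_pmf (map_pmf (\<lambda>x. x + \<alpha>) (map_pmf (\<lambda>f. f 2) (PiQ \<mu>)))"
      unfolding M_def N_def \<xi>_def map_pmf_rep_eq[symmetric] pmf.map_comp o_def .
    hence "\<nu> = map_pmf (\<lambda>x. x + \<alpha>) \<mu>"
      unfolding measure_pmf_inject by (simp add: PiQ_comp PP_def)
    hence "pmf \<nu> ((-\<alpha>) + \<alpha>) = pmf (map_pmf (\<lambda>x. x + \<alpha>) \<mu>) ((-\<alpha>) + \<alpha>)" by simp
    also have "\<dots> = pmf \<mu> (-\<alpha>)" by (rule pmf_map_inj') (simp add: inj_on_def)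
    finally have "pmf \<nu> 0 = pmf \<mu> (-\<alpha>)" by simp
    moreover have "pmf \<nu> 0 = 0"
    proof -
      have "1 + s = s * p" using sp by (simp add: algebra_simps)
      hence q: "(1 + s) / p = s" using p3 by simp
      have "pmf \<nu> 0 = - s + (1 + s) / p" unfolding \<nu>_def pmf_mkpmf_mr[OF h\<nu>] by simp
      thus ?thesis using q by simp
    qed
    moreover have "pmf \<mu> (-\<alpha>) > 0"
    proof -
      have q1: "(1 - s) / p > 0" using p3 s0 by simp
      have "s + (1 - s) / p > 0" using q1 s0 by simp
      note q1 this
      thus ?thesis unfolding \<mu>_def pmf_mkpmf_mr[OF h\<mu>] by simp
    qed
    ultimately show False by simp
  qed
  have sn: "s \<noteq> 0" "-s \<noteq> 0" using s0 by auto
  have cfm: "\<forall>i\<in>{1, 2, 3, 4}. \<forall>y. zp_charfun M (\<xi> i) y \<noteq> 0"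
    unfolding M_def \<mu>_def by (rule cf[OF h\<mu> sn(1)])
  have cfn: "\<forall>i\<in>{1, 2, 3, 4}. \<forall>y. zp_charfun N (\<xi> i) y \<noteq> 0"
    unfolding N_def \<nu>_def by (rule cf[OF h\<nu> sn(2)])
  show ?thesis
    apply (rule exI[of _ M], rule exI[of _ N], rule exI[of _ \<xi>], rule exI[of _ \<xi>])
    apply (intro conjI)
    subgoal unfolding M_def by (rule measure_pmf.prob_space_axioms)
    subgoal unfolding N_def by (rule measure_pmf.prob_space_axioms)
    subgoal unfolding M_def by (rule ind)
    subgoal unfolding N_def by (rule ind)
    subgoal by (rule cfm)
    subgoal by (rule cfn)
    subgoal unfolding M_def by (rule d23)
    subgoal unfolding N_def by (rule d23)
    subgoal by (rule pair)
    subgoal by (rule allI, rule shift)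
    done
qed

end
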